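(* Let $G$ be a strongly Deza graph with parameters $(n,k,b,a)$. Then: (i) $G$ has at most five distinct eigenvalues. (ii) If $G$ has exactly two distinct eigenvalues, then $a=0$, $b=k-1\geqslant 1$, and $G$ is a disjoint union of (at least two) cliques of order $k+1$. (iii) If $G$ has exactly three distinct eigenvalues, then one of the following holds: $G$ is a strongly regular graph with parameters $(n,k,\lambda,\mu)$ where $\{\lambda,\mu\}=\{a,b\}$; or $G$ is disconnected and each connected component is a strongly regular graph with parameters $(v,k,b,b)$ for some $v$; or each connected component of $G$ is a complete bipartite graph $K_{k,k}$ with $k\geqslant 2$.
   Context: All graphs are finite, simple and undirected; eigenvalues of a graph are those of its adjacency matrix. A Deza graph with parameters $(n,k,b,a)$, where $b\geqslant a$, is a $k$-regular graph on $n$ vertices, which is neither complete nor edgeless, such that any two distinct vertices have exactly $b$ or exactly $a$ common neighbours. If $b>a$, the children $G_A$ and $G_B$ of $G$ are the graphs on the vertex set of $G$ in which two distinct vertices are adjacent if and only if they have exactly $a$ (for $G_A$), respectively exactly $b$ (for $G_B$), common neighbours in $G$; if $b=a$, $G_A$ is the complete graph and $G_B$ is the edgeless graph. A strongly regular graph with parameters $(n,k,\lambda,\mu)$ is a $k$-regular graph on $n$ vertices, neither complete nor edgeless, in which any two adjacent vertices have exactly $\lambda$ common neighbours and any two distinct non-adjacent vertices have exactly $\mu$ common neighbours (disconnected examples, i.e. disjoint unions of at least two cliques of equal size, are allowed). A strongly Deza graph is a Deza graph both of whose children are strongly regular graphs. *)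

theory Defs
  imports "HOL-Analysis.Analysis"
begin

text \<open>A finite simple graph on the vertices of a finite type 'a, given by its
adjacency relation E (symmetric, irreflexive). Notions relative to a vertex set V
refer to the subgraph induced on V.\<close>

definition simple_graph :: "('a \<Rightarrow> 'a \<Rightarrow> bool) \<Rightarrow> bool" where
  "simple_graph E \<longleftrightarrow> (\<forall>x y. E x y \<longrightarrow> E y x) \<and> (\<forall>x. \<not> E x x)"

definition nbrs :: "'a set \<Rightarrow> ('a \<Rightarrow> 'a \<Rightarrow> bool) \<Rightarrow> 'a \<Rightarrow> 'a set" where
  "nbrs V E x = {y \<in> V. E x y}"

definition common :: "'a set \<Rightarrow> ('a \<Rightarrow> 'a \<Rightarrow> bool) \<Rightarrow> 'a \<Rightarrow> 'a \<Rightarrow> nat" where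
  "common V E x y = card {z \<in> V. E x z \<and> E y z}"

definition regular_on :: "'a set \<Rightarrow> ('a \<Rightarrow> 'a \<Rightarrow> bool) \<Rightarrow> nat \<Rightarrow> bool" where
  "regular_on V E k \<longleftrightarrow> (\<forall>x\<in>V. card (nbrs V E x) = k)"

definition complete_on :: "'a set \<Rightarrow> ('a \<Rightarrow> 'a \<Rightarrow> bool) \<Rightarrow> bool" where
  "complete_on V E \<longleftrightarrow> (\<forall>x\<in>V. \<forall>y\<in>V. x \<noteq> y \<longrightarrow> E x y)"

definition edgeless_on :: "'a set \<Rightarrow> ('a \<Rightarrow> 'a \<Rightarrow> bool) \<Rightarrow> bool" where
  "edgeless_on V E \<longleftrightarrow> (\<forall>x\<in>V. \<forall>y\<in>V. \<not> E x y)"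

definition deza_on :: "'a set \<Rightarrow> ('a \<Rightarrow> 'a \<Rightarrow> bool) \<Rightarrow> nat \<Rightarrow> nat \<Rightarrow> nat \<Rightarrow> nat \<Rightarrow> bool" where
  "deza_on V E n k b a \<longleftrightarrow> card V = n \<and> regular_on V E k \<and> b \<ge> a \<and>
     \<not> complete_on V E \<and> \<not> edgeless_on V E \<and>
     (\<forall>x\<in>V. \<forall>y\<in>V. x \<noteq> y \<longrightarrow> common V E x y = b \<or> common V E x y = a)"

text \<open>Strongly regular graph with parameters (n,k,lambda,mu) (disconnected ones allowed).\<close>
definition srg_on :: "'a set \<Rightarrow> ('a \<Rightarrow> 'a \<Rightarrow> bool) \<Rightarrow> nat \<Rightarrow> nat \<Rightarrow> nat \<Rightarrow> nat \<Rightarrow> bool" where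
  "srg_on V E n k l m \<longleftrightarrow> card V = n \<and> regular_on V E k \<and>
     \<not> complete_on V E \<and> \<not> edgeless_on V E \<and>
     (\<forall>x\<in>V. \<forall>y\<in>V. x \<noteq> y \<longrightarrow> E x y \<longrightarrow> common V E x y = l) \<and>
     (\<forall>x\<in>V. \<forall>y\<in>V. x \<noteq> y \<longrightarrow> \<not> E x y \<longrightarrow> common V E x y = m)"

definition childA :: "'a set \<Rightarrow> ('a \<Rightarrow> 'a \<Rightarrow> bool) \<Rightarrow> nat \<Rightarrow> nat \<Rightarrow> 'a \<Rightarrow> 'a \<Rightarrow> bool" where
  "childA V E b a x y \<longleftrightarrow> (if b > a then x \<noteq> y \<and> common V E x y = a else x \<noteq> y)"

definition childB :: "'a set \<Rightarrow> ('a \<Rightarrow> 'a \<Rightarrow> bool) \<Rightarrow> nat \<Rightarrow> nat \<Rightarrow> 'a \<Rightarrow> 'a \<Rightarrow> bool" where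
  "childB V E b a x y \<longleftrightarrow> (if b > a then x \<noteq> y \<and> common V E x y = b else False)"

definition strongly_deza :: "('a::finite \<Rightarrow> 'a \<Rightarrow> bool) \<Rightarrow> nat \<Rightarrow> nat \<Rightarrow> nat \<Rightarrow> nat \<Rightarrow> bool" where
  "strongly_deza E n k b a \<longleftrightarrow> simple_graph E \<and> deza_on UNIV E n k b a \<and>
     (\<exists>n1 k1 l1 m1. srg_on UNIV (childA UNIV E b a) n1 k1 l1 m1) \<and>
     (\<exists>n2 k2 l2 m2. srg_on UNIV (childB UNIV E b a) n2 k2 l2 m2)"

definition adj_matrix :: "('a::finite \<Rightarrow> 'a \<Rightarrow> bool) \<Rightarrow> real^'a^'a" where
  "adj_matrix E = (\<chi> x y. if E x y then 1 else 0)"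

definition eigenvalues :: "('a::finite \<Rightarrow> 'a \<Rightarrow> bool) \<Rightarrow> real set" where
  "eigenvalues E = {c. \<exists>v. v \<noteq> 0 \<and> adj_matrix E *v v = c *\<^sub>R v}"

definition components :: "('a \<Rightarrow> 'a \<Rightarrow> bool) \<Rightarrow> 'a set set" where
  "components E = {{y. E\<^sup>*\<^sup>* x y} | x. True}"

definition complete_bipartite_on :: "'a set \<Rightarrow> ('a \<Rightarrow> 'a \<Rightarrow> bool) \<Rightarrow> nat \<Rightarrow> bool" where
  "complete_bipartite_on C E k \<longleftrightarrow> (\<exists>X Y. X \<inter> Y = {} \<and> X \<union> Y = C \<and> card X = k \<and> card Y = k \<and>
     (\<forall>x\<in>C. \<forall>y\<in>C. E x y \<longleftrightarrow> (x \<in> X \<and> y \<in> Y) \<or> (x \<in> Y \<and> y \<in> X)))"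

end

theory Submission
  imports Defs
begin


definition Top :: "('a::finite \<Rightarrow> 'a \<Rightarrow> bool) \<Rightarrow> ('a \<Rightarrow> real) \<Rightarrow> 'a \<Rightarrow> real" where
  "Top R f x = (\<Sum>y\<in>UNIV. if R x y then f y else 0)"

lemma sum_if_const: "(\<Sum>y\<in>(UNIV::'a::finite set). if P y then c else 0) = real (card {y. P y}) * (c::real)"
proof -
  have "(\<Sum>y\<in>(UNIV::'a set). if P y then c else 0) = (\<Sum>y\<in>{y\<in>UNIV. P y}. c)"
    by (subst sum.inter_filter[symmetric]) auto
  then show ?thesis by simp
qed

lemma Top_diff: "Top R (\<lambda>y. f y - g y) x = Top R f x - Top R g x"
  by (auto simp: Top_def sum_subtractf[symmetric] intro!: sum.cong)

lemma Top_add: "Top R (\<lambda>y. f y + g y) x = Top R f x + Top R g x"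
  by (auto simp: Top_def sum.distrib[symmetric] intro!: sum.cong)

lemma Top_scale: "Top R (\<lambda>y. c * f y) x = c * Top R f x"
  by (auto simp: Top_def sum_distrib_left intro!: sum.cong)

lemma Top_const: "Top R (\<lambda>y. c) x = real (card {y. R x y}) * c"
  unfolding Top_def by (rule sum_if_const)

lemma Top_zero: "Top R (\<lambda>y. 0) x = 0"
  by (simp add: Top_def)

lemma Top_sum: "(\<Sum>x\<in>UNIV. Top R f x) = (\<Sum>y\<in>UNIV. real (card {x. R x y}) * f y)"
proof -
  have "(\<Sum>x\<in>UNIV. Top R f x) = (\<Sum>y\<in>UNIV. \<Sum>x\<in>UNIV. if R x y then f y else 0)"
    unfolding Top_def by (rule sum.swap)
  also have "\<dots> = (\<Sum>y\<in>UNIV. real (card {x. R x y}) * f y)"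
    by (intro sum.cong refl sum_if_const)
  finally show ?thesis .
qed

lemma Top2: "Top R (Top R f) x = (\<Sum>z\<in>UNIV. real (card {y. R x y \<and> R y z}) * f z)"
proof -
  have "Top R (Top R f) x = (\<Sum>y\<in>UNIV. \<Sum>z\<in>UNIV. if R x y \<and> R y z then f z else 0)"
    unfolding Top_def by (auto simp: sum_distrib_left if_distrib intro!: sum.cong)
  also have "\<dots> = (\<Sum>z\<in>UNIV. \<Sum>y\<in>UNIV. if R x y \<and> R y z then f z else 0)"
    by (rule sum.swap)
  also have "\<dots> = (\<Sum>z\<in>UNIV. real (card {y. R x y \<and> R y z}) * f z)"
    by (intro sum.cong refl sum_if_const)
  finally show ?thesis .
qed

lemma Top_symm:
  assumes "\<And>x y. R x y \<Longrightarrow> R y x"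
  shows "(\<Sum>x\<in>UNIV. g x * Top R h x) = (\<Sum>x\<in>UNIV. h x * Top R g x)"
proof -
  have "(\<Sum>x\<in>UNIV. g x * Top R h x) = (\<Sum>x\<in>UNIV. \<Sum>y\<in>UNIV. if R x y then g x * h y else 0)"
    unfolding Top_def by (auto simp: sum_distrib_left intro!: sum.cong)
  also have "\<dots> = (\<Sum>y\<in>UNIV. \<Sum>x\<in>UNIV. if R x y then g x * h y else 0)"
    by (rule sum.swap)
  also have "\<dots> = (\<Sum>y\<in>UNIV. h y * Top R g y)"
    unfolding Top_def using assms by (auto simp: sum_distrib_left intro!: sum.cong)
  finally show ?thesis .
qed


lemma Top_lin: "Top R (\<lambda>y. f y - c * g y) x = Top R f x - c * Top R g x"
  by (simp add: Top_diff Top_scale)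

definition step :: "('a::finite \<Rightarrow> 'a \<Rightarrow> bool) \<Rightarrow> real \<Rightarrow> ('a \<Rightarrow> real) \<Rightarrow> 'a \<Rightarrow> real" where
  "step R \<rho> f = (\<lambda>x. Top R f x - \<rho> * f x)"

fun prodop :: "('a::finite \<Rightarrow> 'a \<Rightarrow> bool) \<Rightarrow> real list \<Rightarrow> ('a \<Rightarrow> real) \<Rightarrow> 'a \<Rightarrow> real" where
  "prodop R [] f = f"
| "prodop R (\<rho> # xs) f = step R \<rho> (prodop R xs f)"

lemma step_lin: "step R \<rho> (\<lambda>x. f x - c * g x) = (\<lambda>x. step R \<rho> f x - c * step R \<rho> g x)"
  by (auto simp: step_def Top_lin algebra_simps)

lemma step_comm: "step R \<rho> (step R \<sigma> f) = step R \<sigma> (step R \<rho> f)"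
proof -
  have "step R \<rho> (step R \<sigma> f) = (\<lambda>x. step R \<rho> (Top R f) x - \<sigma> * step R \<rho> f x)"
    unfolding step_def[of R \<sigma>] by (rule step_lin)
  also have "\<dots> = (\<lambda>x. step R \<sigma> (Top R f) x - \<rho> * step R \<sigma> f x)"
    by (auto simp: step_def algebra_simps)
  also have "\<dots> = step R \<sigma> (step R \<rho> f)"
    unfolding step_def[of R \<rho>] by (rule step_lin[symmetric])
  finally show ?thesis .
qed

lemma prodop_step: "prodop R xs (step R \<rho> g) = step R \<rho> (prodop R xs g)"
  by (induction xs) (simp_all add: step_comm)

lemma prodop_append: "prodop R (xs @ ys) f = prodop R xs (prodop R ys f)"
  by (induction xs) simp_all

lemma prodop_remove1: "\<rho> \<in> set xs \<Longrightarrow> prodop R xs g = step R \<rho> (prodop R (remove1 \<rho> xs) g)"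
proof (induction xs)
  case Nil then show ?case by simp
next
  case (Cons x xs)
  show ?case
  proof (cases "x = \<rho>")
    case True then show ?thesis by simp
  next
    case False
    then have "\<rho> \<in> set xs" using Cons.prems by simp
    then show ?thesis using False Cons.IH by (simp add: step_comm)
  qed
qed

lemma prodop_mset: "mset xs = mset ys \<Longrightarrow> prodop R xs g = prodop R ys g"
proof (induction xs arbitrary: ys)
  case Nil then show ?case by simp
next
  case (Cons x xs)
  then have x: "x \<in> set ys" by (metis list.set_intros(1) set_mset_mset)
  have "mset xs = mset (remove1 x ys)" by (simp add: Cons.prems[symmetric])
  then have "prodop R xs g = prodop R (remove1 x ys) g" using Cons.IH by blast
  then show ?case using prodop_remove1[OF x, of R g] by simp
qed

lemma prodop_lin: "prodop R xs (\<lambda>x. f x - c * g x) = (\<lambda>x. prodop R xs f x - c * prodop R xs g x)"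
  by (induction xs) (simp_all add: step_lin)

lemma prodop_eig:
  assumes "Top R f = (\<lambda>x. c * f x)"
  shows "prodop R xs f = (\<lambda>x. (\<Prod>\<rho>\<leftarrow>xs. c - \<rho>) * f x)"
proof (induction xs)
  case Nil then show ?case by simp
next
  case (Cons \<rho> xs)
  let ?p = "(\<Prod>\<rho>\<leftarrow>xs. c - \<rho>)"
  have T: "Top R (\<lambda>y. ?p * f y) x = ?p * (c * f x)" for x
    using Top_scale[of R ?p f] fun_cong[OF assms] by simp
  have "step R \<rho> (\<lambda>x. ?p * f x) = (\<lambda>x. (c - \<rho>) * ?p * f x)"
    unfolding step_def by (rule ext) (simp only: T, simp add: algebra_simps)
  then show ?case using Cons by simp
qed


definition Eig :: "('a::finite \<Rightarrow> 'a \<Rightarrow> bool) \<Rightarrow> real set" where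
  "Eig R = {c. \<exists>f. f \<noteq> (\<lambda>_. 0) \<and> Top R f = (\<lambda>x. c * f x)}"

lemma step_inj:
  assumes "c \<notin> Eig R" "step R c g = (\<lambda>_. 0)"
  shows "g = (\<lambda>_. 0)"
proof (rule ccontr)
  assume "g \<noteq> (\<lambda>_. 0)"
  moreover have "Top R g = (\<lambda>x. c * g x)"
  proof
    fix x show "Top R g x = c * g x" using fun_cong[OF assms(2), of x] by (simp add: step_def)
  qed
  ultimately have "c \<in> Eig R" unfolding Eig_def by blast
  with assms(1) show False by simp
qed

lemma sq_red:
  assumes sym: "\<And>x y. R x y \<Longrightarrow> R y x"
  and h: "step R \<rho> (step R \<rho> Y) = (\<lambda>_. 0)"
  shows "step R \<rho> Y = (\<lambda>_. 0)"
proof -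
  define Z where "Z = step R \<rho> Y"
  have Zx: "Z x = Top R Y x - \<rho> * Y x" for x by (simp add: Z_def step_def)
  have "(\<Sum>x\<in>UNIV. Z x * Z x) = (\<Sum>x\<in>UNIV. Z x * Top R Y x - \<rho> * (Z x * Y x))"
    by (rule sum.cong) (simp_all add: Zx algebra_simps)
  also have "\<dots> = (\<Sum>x\<in>UNIV. Z x * Top R Y x) - \<rho> * (\<Sum>x\<in>UNIV. Z x * Y x)"
    by (simp add: sum_subtractf sum_distrib_left)
  also have "\<dots> = (\<Sum>x\<in>UNIV. Y x * Top R Z x) - \<rho> * (\<Sum>x\<in>UNIV. Y x * Z x)"
    using Top_symm[of R Z Y, OF sym] by (simp add: mult.commute)
  also have "\<dots> = (\<Sum>x\<in>UNIV. Y x * Top R Z x - \<rho> * (Y x * Z x))"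
    by (simp add: sum_subtractf sum_distrib_left)
  also have "\<dots> = (\<Sum>x\<in>UNIV. Y x * step R \<rho> Z x)"
    by (rule sum.cong) (simp_all add: step_def algebra_simps)
  also have "\<dots> = 0" using h by (simp add: Z_def)
  finally have "(\<Sum>x\<in>UNIV. Z x * Z x) = 0" .
  then have "\<forall>x\<in>UNIV. Z x * Z x = 0"
    by (subst sum_nonneg_eq_0_iff[symmetric]) auto
  then show ?thesis by (auto simp: Z_def)
qed

lemma minpoly:
  assumes sym: "\<And>x y. R x y \<Longrightarrow> R y x"
  shows "(\<forall>f. prodop R (\<rho>s @ \<sigma>s) f = (\<lambda>_. 0)) \<Longrightarrow>
         (\<forall>f. prodop R (remdups (filter (\<lambda>\<rho>. \<rho> \<in> Eig R) \<rho>s) @ \<sigma>s) f = (\<lambda>_. 0))"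
proof (induction \<rho>s arbitrary: \<sigma>s)
  case Nil then show ?case by simp
next
  case (Cons \<rho> rest)
  show ?case
  proof (cases "\<rho> \<in> Eig R")
    case False
    have "prodop R (rest @ \<sigma>s) f = (\<lambda>_. 0)" for f
      using step_inj[OF False] Cons.prems by simp
    then show ?thesis using Cons.IH False by simp
  next
    case True
    have "prodop R (rest @ (\<rho> # \<sigma>s)) f = (\<lambda>_. 0)" for f
      using Cons.prems by (simp add: prodop_append prodop_step)
    then have IH: "prodop R (remdups (filter (\<lambda>\<rho>. \<rho> \<in> Eig R) rest) @ (\<rho> # \<sigma>s)) f = (\<lambda>_. 0)" for f
      using Cons.IH by blast
    define L' where "L' = remdups (filter (\<lambda>\<rho>. \<rho> \<in> Eig R) rest)"
    show ?thesis
    proof (cases "\<rho> \<in> set L'")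
      case False
      then have eq: "remdups (filter (\<lambda>\<rho>. \<rho> \<in> Eig R) (\<rho> # rest)) = \<rho> # L'"
        using True by (simp add: L'_def)
      show ?thesis unfolding eq using IH
        by (simp add: L'_def prodop_append prodop_step)
    next
      case rin: True
      then have eq: "remdups (filter (\<lambda>\<rho>. \<rho> \<in> Eig R) (\<rho> # rest)) = L'"
        using True by (simp add: L'_def)
      show ?thesis unfolding eq
      proof
        fix f
        define Y where "Y = prodop R (remove1 \<rho> L') (prodop R \<sigma>s f)"
        have e1: "prodop R (L' @ \<sigma>s) f = step R \<rho> Y"
          unfolding Y_def prodop_append using prodop_remove1[OF rin] by blast
        have "(\<lambda>_. 0) = prodop R (L' @ \<rho> # \<sigma>s) f" using IH L'_def by simp
        also have "\<dots> = step R \<rho> (prodop R L' (prodop R \<sigma>s f))"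
          by (simp add: prodop_append prodop_step)
        also have "\<dots> = step R \<rho> (step R \<rho> Y)"
          using e1 unfolding prodop_append by (rule arg_cong)
        finally have "step R \<rho> (step R \<rho> Y) = (\<lambda>_. 0)" by (rule HOL.sym)
        then have "step R \<rho> Y = (\<lambda>_. 0)" using sq_red[of R \<rho> Y] assms by blast
        then show "prodop R (L' @ \<sigma>s) f = (\<lambda>_. 0)" using e1 by simp
      qed
    qed
  qed
qed


definition sq :: "('a::finite \<Rightarrow> 'a \<Rightarrow> bool) \<Rightarrow> real \<Rightarrow> ('a \<Rightarrow> real) \<Rightarrow> 'a \<Rightarrow> real" where
  "sq R t f = (\<lambda>x. Top R (Top R f) x - t * f x)"

lemma Top2_lin: "Top R (Top R (\<lambda>y. f y - c * g y)) x = Top R (Top R f) x - c * Top R (Top R g) x"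
proof -
  have "Top R (\<lambda>y. f y - c * g y) = (\<lambda>y. Top R f y - c * Top R g y)"
    by (rule ext) (rule Top_lin)
  then show ?thesis by (simp add: Top_lin)
qed

lemma sq_step_comm: "sq R t (step R \<rho> f) = step R \<rho> (sq R t f)"
  unfolding sq_def step_def
  by (rule ext) (simp add: Top2_lin Top_lin algebra_simps)

lemma prodop_sq: "prodop R xs (sq R t h) = sq R t (prodop R xs h)"
  by (induction xs) (simp_all add: sq_step_comm)

lemma sq_as_step: "t \<ge> 0 \<Longrightarrow> step R (sqrt t) (step R (- sqrt t) h) = sq R t h"
proof -
  assume t: "t \<ge> 0"
  have A: "Top R (step R (- sqrt t) h) x = Top R (Top R h) x + sqrt t * Top R h x" for x
    using Top_lin[of R "Top R h" "- sqrt t" h] unfolding step_def by simp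
  have "step R (sqrt t) (step R (- sqrt t) h) = (\<lambda>x. Top R (Top R h) x - (sqrt t * sqrt t) * h x)"
    unfolding step_def[of R "sqrt t"] A
    by (rule ext) (simp add: step_def algebra_simps)
  also have "\<dots> = sq R t h" using t by (simp add: sq_def)
  finally show ?thesis .
qed

lemma sq_inj:
  assumes sym: "\<And>x y. R x y \<Longrightarrow> R y x" and t: "t < 0" and h: "sq R t g = (\<lambda>_. 0)"
  shows "g = (\<lambda>_. 0)"
proof -
  have "0 = (\<Sum>x\<in>UNIV. g x * sq R t g x)" using h by simp
  also have "\<dots> = (\<Sum>x\<in>UNIV. g x * Top R (Top R g) x) - t * (\<Sum>x\<in>UNIV. g x * g x)"
    by (simp add: sq_def algebra_simps sum_subtractf sum_distrib_left)
  also have "(\<Sum>x\<in>UNIV. g x * Top R (Top R g) x) = (\<Sum>x\<in>UNIV. Top R g x * Top R g x)"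
    using Top_symm[of R g "Top R g", OF sym] by simp
  finally have eq: "0 = (\<Sum>x\<in>UNIV. Top R g x * Top R g x) + (- t) * (\<Sum>x\<in>UNIV. g x * g x)" by simp
  have n1: "(\<Sum>x\<in>UNIV. Top R g x * Top R g x) \<ge> 0" by (intro sum_nonneg) auto
  have n2: "(\<Sum>x\<in>UNIV. g x * g x) \<ge> 0" by (intro sum_nonneg) auto
  have "(- t) * (\<Sum>x\<in>UNIV. g x * g x) = 0" using eq n1 n2 t
    by (smt (verit) mult_nonneg_nonneg)
  then have "(\<Sum>x\<in>UNIV. g x * g x) = 0" using t by simp
  then have "\<forall>x\<in>UNIV. g x * g x = 0"
    by (subst sum_nonneg_eq_0_iff[symmetric]) auto
  then show ?thesis by auto
qed

definition Pt :: "real \<Rightarrow> real list" where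
  "Pt t = (if t \<ge> 0 then [sqrt t, - sqrt t] else [])"

lemma SQ:
  assumes sym: "\<And>x y. R x y \<Longrightarrow> R y x" and h: "\<forall>f. sq R t (G f) = (\<lambda>_. 0)"
  shows "\<forall>f. prodop R (Pt t) (G f) = (\<lambda>_. 0)"
proof
  fix f
  show "prodop R (Pt t) (G f) = (\<lambda>_. 0)"
  proof (cases "t \<ge> 0")
    case True
    then have "prodop R (Pt t) (G f) = sq R t (G f)"
      using sq_as_step[OF True] by (simp add: Pt_def)
    then show ?thesis using h by simp
  next
    case False
    then show ?thesis using h sq_inj[of R t "G f"] sym by (simp add: Pt_def)
  qed
qed

lemma Top_matrix: "(adj_matrix E *v v) $ x = Top E (\<lambda>y. v $ y) x"
  unfolding matrix_vector_mult_def adj_matrix_def Top_def vec_lambda_beta by (rule sum.cong) auto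

lemma eigenvalues_Eig: "eigenvalues E = Eig E"
proof
  show "eigenvalues E \<subseteq> Eig E"
  proof
    fix c assume "c \<in> eigenvalues E"
    then obtain v where v: "v \<noteq> 0" "adj_matrix E *v v = c *\<^sub>R v" by (auto simp: eigenvalues_def)
    have "(\<lambda>y. v $ y) \<noteq> (\<lambda>_. 0)" using v(1) by (metis vec_eq_iff zero_index)
    moreover have "Top E (\<lambda>y. v $ y) = (\<lambda>x. c * v $ x)"
      using v(2) by (auto simp: vec_eq_iff Top_matrix[symmetric])
    ultimately show "c \<in> Eig E" unfolding Eig_def by blast
  qed
next
  show "Eig E \<subseteq> eigenvalues E"
  proof
    fix c assume "c \<in> Eig E"
    then obtain f where f: "f \<noteq> (\<lambda>_. 0)" "Top E f = (\<lambda>x. c * f x)" by (auto simp: Eig_def)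
    define v :: "real^'a" where "v = (\<chi> y. f y)"
    have "v \<noteq> 0" using f(1) by (auto simp: v_def vec_eq_iff)
    moreover have "adj_matrix E *v v = c *\<^sub>R v"
      using f(2) by (auto simp: vec_eq_iff Top_matrix v_def)
    ultimately show "c \<in> eigenvalues E" unfolding eigenvalues_def by blast
  qed
qed


lemma Top2_gen:
  assumes cnt: "\<And>x z. card {y. R x y \<and> R y z} = (if x = z then d else if S x z then p else q)"
  and irrS: "\<And>x. \<not> S x x"
  shows "Top R (Top R f) x = real q * (\<Sum>y\<in>UNIV. f y) + (real d - real q) * f x + (real p - real q) * Top S f x"
proof -
  have pw: "real (card {y. R x y \<and> R y z}) * f z =
      real q * f z + (if x = z then (real d - real q) * f z else 0) + (if S x z then (real p - real q) * f z else 0)" for z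
    using irrS[of x] by (auto simp: cnt algebra_simps)
  have "Top R (Top R f) x = (\<Sum>z\<in>UNIV. real q * f z + (if x = z then (real d - real q) * f z else 0) + (if S x z then (real p - real q) * f z else 0))"
    unfolding Top2 using pw by (intro sum.cong) auto
  also have "\<dots> = real q * (\<Sum>y\<in>UNIV. f y) + (real d - real q) * f x + (real p - real q) * Top S f x"
  proof -
    have t: "(real p - real q) * Top S f x = (\<Sum>z\<in>UNIV. if S x z then (real p - real q) * f z else 0)"
      unfolding Top_def sum_distrib_left by (rule sum.cong) auto
    show ?thesis unfolding sum.distrib t by (simp add: sum_distrib_left)
  qed
  finally show ?thesis .
qed

lemma Top_sum_reg:
  assumes "\<And>x y. R x y \<Longrightarrow> R y x" "\<And>x. card {y. R x y} = d"
  shows "(\<Sum>x\<in>UNIV. Top R f x) = real d * (\<Sum>y\<in>UNIV. f y)"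
proof -
  have "{x. R x y} = {x. R y x}" for y using assms(1) by blast
  then show ?thesis unfolding Top_sum using assms(2) by (simp add: sum_distrib_left)
qed


lemma step2: "step R \<theta> (step R \<theta>' f) x = Top R (Top R f) x - (\<theta> + \<theta>') * Top R f x + \<theta> * \<theta>' * f x"
proof -
  have "Top R (step R \<theta>' f) x = Top R (Top R f) x - \<theta>' * Top R f x"
    unfolding step_def by (rule Top_lin)
  then show ?thesis by (simp add: step_def algebra_simps)
qed

definition ind :: "'a \<Rightarrow> 'a \<Rightarrow> real" where "ind z = (\<lambda>y. if y = z then 1 else 0)"

lemma Top_ind: "Top R (ind z) x = (if R x z then 1 else 0)"
proof -
  have "Top R (ind z) x = (\<Sum>y\<in>UNIV. if y = z then (if R x y then 1 else 0) else 0)"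
    unfolding Top_def ind_def by (rule sum.cong) auto
  then show ?thesis by simp
qed

lemma Top2_ind: "Top R (Top R (ind (z::'a::finite))) x = real (card {y. R x y \<and> R y z})"
proof -
  have "Top R (Top R (ind z)) x = (\<Sum>w\<in>UNIV. if w = z then real (card {y. R x y \<and> R y w}) else 0)"
    unfolding Top2 ind_def by (rule sum.cong) auto
  then show ?thesis by simp
qed

lemma quad_card: "finite {x::real. x^2 = p + q * x} \<and> card {x::real. x^2 = p + q * x} \<le> 2"
proof (cases "{x::real. x^2 = p + q * x} = {}")
  case True then show ?thesis by simp
next
  case False
  then obtain x0 where x0: "x0^2 = p + q * x0" by blast
  have "{x::real. x^2 = p + q * x} \<subseteq> {x0, q - x0}"
  proof
    fix y assume "y \<in> {x::real. x^2 = p + q * x}"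
    then have "y^2 = p + q * y" by simp
    with x0 have "(y - x0) * (y + x0 - q) = 0" by (simp add: algebra_simps power2_eq_square)
    then show "y \<in> {x0, q - x0}" by auto
  qed
  moreover have "card {x0, q - x0} \<le> 2" by (simp add: card_insert_le_m1)
  ultimately show ?thesis by (meson card_mono finite.emptyI finite.insertI finite_subset le_trans)
qed

locale SD =
  fixes E :: "'a::finite \<Rightarrow> 'a \<Rightarrow> bool" and n k b a nB kB lB mB :: nat
  assumes sd: "strongly_deza E n k b a"
  and srgB: "srg_on UNIV (childB UNIV E b a) nB kB lB mB"
begin

abbreviation B where "B \<equiv> childB UNIV E b a"

lemma sg: "simple_graph E" and dz: "deza_on UNIV E n k b a"
  using sd by (auto simp: strongly_deza_def)

lemma symE: "E x y \<Longrightarrow> E y x" using sg by (auto simp: simple_graph_def)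
lemma irrE: "\<not> E x x" using sg by (auto simp: simple_graph_def)
lemma regE: "card {y. E x y} = k" using dz by (auto simp: deza_on_def regular_on_def nbrs_def)

lemma ab: "a < b"
proof (rule ccontr)
  assume nab: "\<not> a < b"
  obtain n1 k1 l1 m1 where "srg_on UNIV (childA UNIV E b a) n1 k1 l1 m1"
    using sd by (auto simp: strongly_deza_def)
  then have "\<not> complete_on UNIV (childA UNIV E b a)" by (simp add: srg_on_def)
  moreover have "complete_on UNIV (childA UNIV E b a)" using nab by (simp add: complete_on_def childA_def)
  ultimately show False by simp
qed

lemma Bdef: "B x y \<longleftrightarrow> x \<noteq> y \<and> common UNIV E x y = b" using ab by (simp add: childB_def)
lemma Adef: "childA UNIV E b a x y \<longleftrightarrow> x \<noteq> y \<and> common UNIV E x y = a" using ab by (simp add: childA_def)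

lemma common_eq: "common UNIV E x y = card {z. E x z \<and> E z y}"
proof -
  have "{z\<in>UNIV. E x z \<and> E y z} = {z. E x z \<and> E z y}" using symE by blast
  then show ?thesis by (simp add: common_def)
qed

lemma ab_cases: "x \<noteq> y \<Longrightarrow> common UNIV E x y = a \<or> common UNIV E x y = b"
  using dz by (auto simp: deza_on_def)

lemma cntE: "card {y. E x y \<and> E y z} = (if x = z then k else if B x z then b else a)"
proof (cases "x = z")
  case True
  then have "{y. E x y \<and> E y z} = {y. E x y}" using symE by blast
  then show ?thesis using True regE by simp
next
  case False
  then show ?thesis using ab_cases[OF False] by (auto simp: Bdef common_eq)
qed

lemma symB: "B x y \<Longrightarrow> B y x"
  by (auto simp: Bdef common_eq) (metis (no_types, lifting) Collect_cong symE)

lemma irrB: "\<not> B x x" by (simp add: Bdef)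

lemma regB: "card {y. B x y} = kB" using srgB by (auto simp: srg_on_def regular_on_def nbrs_def)

lemma cntB: "card {y. B x y \<and> B y z} = (if x = z then kB else if B x z then lB else mB)"
proof -
  have c: "common UNIV B x z = card {y. B x y \<and> B y z}"
  proof -
    have "{y\<in>UNIV. B x y \<and> B z y} = {y. B x y \<and> B y z}" using symB by blast
    then show ?thesis by (simp add: common_def)
  qed
  show ?thesis
  proof (cases "x = z")
    case True
    then have "{y. B x y \<and> B y z} = {y. B x y}" using symB by blast
    then show ?thesis using True regB by simp
  next
    case False
    then show ?thesis using srgB c by (auto simp: srg_on_def)
  qed
qed

lemma exA: "\<exists>x y. x \<noteq> y \<and> common UNIV E x y = a"
proof -
  obtain n1 k1 l1 m1 where "srg_on UNIV (childA UNIV E b a) n1 k1 l1 m1"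
    using sd by (auto simp: strongly_deza_def)
  then have "\<not> edgeless_on UNIV (childA UNIV E b a)" by (simp add: srg_on_def)
  then show ?thesis by (auto simp: edgeless_on_def Adef)
qed

lemma exB: "\<exists>x y. B x y"
  using srgB by (auto simp: srg_on_def edgeless_on_def)

lemma exNB: "\<exists>x y. x \<noteq> y \<and> \<not> B x y"
  using srgB by (auto simp: srg_on_def complete_on_def)

lemma k_pos: "k > 0"
proof -
  obtain x y where xy: "E x y" using dz by (auto simp: deza_on_def edgeless_on_def)
  have "0 < card {y. E x y}" by (rule card_gt_0_iff[THEN iffD2]) (use xy in auto)
  then show ?thesis using regE[of x] by simp
qed

lemma mB_le: "mB \<le> kB"
proof -
  obtain x y where xy: "x \<noteq> y" "\<not> B x y" using exNB by blast
  have "mB = card {z. B x z \<and> B z y}" using cntB[of x y] xy by simp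
  also have "\<dots> \<le> card {z. B x z}" by (intro card_mono) auto
  finally show ?thesis using regB by simp
qed

lemma E2: "Top E (Top E f) x = real a * (\<Sum>y\<in>UNIV. f y) + (real k - real a) * f x + (real b - real a) * Top B f x"
  by (rule Top2_gen[OF cntE irrB])

lemma B2: "Top B (Top B f) x = real mB * (\<Sum>y\<in>UNIV. f y) + (real kB - real mB) * f x + (real lB - real mB) * Top B f x"
  by (rule Top2_gen[OF cntB irrB])

lemma sumE: "(\<Sum>x\<in>UNIV. Top E f x) = real k * (\<Sum>y\<in>UNIV. f y)"
  by (rule Top_sum_reg[OF symE regE])

lemma sumB: "(\<Sum>x\<in>UNIV. Top B f x) = real kB * (\<Sum>y\<in>UNIV. f y)"
  by (rule Top_sum_reg[OF symB regB])

definition "\<beta> = real b - real a"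
definition "PP = (real lB - real mB) * \<beta>"
definition "QQ = (real kB - real mB) * \<beta>^2"
definition "disc = PP^2 + 4 * QQ"
definition "u1 = (PP + sqrt disc) / 2"
definition "u2 = (PP - sqrt disc) / 2"
definition "t1 = real k - real a + u1"
definition "t2 = real k - real a + u2"

lemma disc_nn: "disc \<ge> 0"
  using mB_le by (simp add: disc_def QQ_def)

lemma u_sum: "u1 + u2 = PP" by (simp add: u1_def u2_def field_simps)
lemma u_prod: "u1 * u2 = - QQ"
proof -
  have "u1 * u2 = (PP^2 - (sqrt disc)^2) / 4" by (simp add: u1_def u2_def field_simps power2_eq_square)
  also have "\<dots> = - QQ" using disc_nn by (simp add: disc_def)
  finally show ?thesis .
qed

lemma sqU:
  assumes "(\<Sum>y\<in>UNIV. g y) = 0"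
  shows "sq E (real k - real a + u) g = (\<lambda>x. \<beta> * Top B g x - u * g x)"
  unfolding sq_def by (rule ext) (simp add: E2 assms \<beta>_def algebra_simps)

lemma annU:
  assumes g: "(\<Sum>y\<in>UNIV. g y) = 0"
  shows "sq E t1 (sq E t2 g) = (\<lambda>_. 0)"
proof -
  define h where "h = sq E t2 g"
  have h: "h = (\<lambda>x. \<beta> * Top B g x - u2 * g x)" unfolding h_def t2_def by (rule sqU[OF g])
  have hs: "(\<Sum>y\<in>UNIV. h y) = 0"
    by (simp add: h sum_subtractf sum_distrib_left[symmetric] sumB g)
  have "sq E t1 h = (\<lambda>x. \<beta> * Top B h x - u1 * h x)" unfolding t1_def by (rule sqU[OF hs])
  also have "\<dots> = (\<lambda>x. (\<beta> * \<beta> * (real kB - real mB) + u1 * u2) * g x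
       + (\<beta> * \<beta> * (real lB - real mB) - \<beta> * (u1 + u2)) * Top B g x)"
  proof (rule ext)
    fix x
    have "Top B h x = \<beta> * Top B (Top B g) x - u2 * Top B g x"
    proof -
      have "Top B h x = Top B (\<lambda>y. \<beta> * Top B g y) x - u2 * Top B g x"
        unfolding h by (rule Top_lin)
      then show ?thesis by (simp add: Top_scale)
    qed
    then have e1: "Top B h x = \<beta> * ((real kB - real mB) * g x + (real lB - real mB) * Top B g x) - u2 * Top B g x"
      using B2[of g x] g by simp
    have hx: "h x = \<beta> * Top B g x - u2 * g x" by (simp add: h)
    show "\<beta> * Top B h x - u1 * h x = (\<beta> * \<beta> * (real kB - real mB) + u1 * u2) * g x
       + (\<beta> * \<beta> * (real lB - real mB) - \<beta> * (u1 + u2)) * Top B g x"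
      unfolding e1 hx by (simp add: algebra_simps)
  qed
  also have "\<dots> = (\<lambda>_. 0)"
    by (simp add: u_sum u_prod PP_def QQ_def power2_eq_square)
  finally show ?thesis by (simp add: h_def)
qed

lemma ann: "\<forall>f. prodop E (Pt t2 @ Pt t1 @ [real k]) f = (\<lambda>_. 0)"
proof -
  have s0: "(\<Sum>y\<in>UNIV. step E (real k) f y) = 0" for f
    by (simp add: step_def sum_subtractf sum_distrib_left[symmetric] sumE)
  have "\<forall>f. sq E t1 (sq E t2 (step E (real k) f)) = (\<lambda>_. 0)"
    using annU s0 by blast
  then have "\<forall>f. prodop E (Pt t1) (sq E t2 (step E (real k) f)) = (\<lambda>_. 0)"
    using SQ[where R=E and t=t1 and G="\<lambda>f. sq E t2 (step E (real k) f)"] symE by blast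
  then have "\<forall>f. sq E t2 (prodop E (Pt t1) (step E (real k) f)) = (\<lambda>_. 0)"
    by (simp add: prodop_sq)
  then have "\<forall>f. prodop E (Pt t2) (prodop E (Pt t1) (step E (real k) f)) = (\<lambda>_. 0)"
    using SQ[where R=E and t=t2 and G="\<lambda>f. prodop E (Pt t1) (step E (real k) f)"] symE by blast
  then show ?thesis by (simp add: prodop_append)
qed


definition "\<rho>s = Pt t2 @ Pt t1 @ [real k]"
definition "L = remdups (filter (\<lambda>\<rho>. \<rho> \<in> Eig E) \<rho>s)"

lemma L_ann: "prodop E L f = (\<lambda>_. 0)"
  using minpoly[of E "\<rho>s" "[]", OF symE] ann unfolding \<rho>s_def L_def by auto

lemma k_eig: "real k \<in> Eig E"
proof -
  have "Top E (\<lambda>_. 1) = (\<lambda>x. real k * 1)" by (rule ext) (simp add: Top_const regE)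
  then show ?thesis unfolding Eig_def by (intro CollectI exI[of _ "\<lambda>_. 1"]) (auto simp: fun_eq_iff)
qed

lemma Eig_sub: "Eig E \<subseteq> set \<rho>s"
proof
  fix c assume "c \<in> Eig E"
  then obtain f where f: "f \<noteq> (\<lambda>_. 0)" "Top E f = (\<lambda>x. c * f x)" by (auto simp: Eig_def)
  then obtain x where x: "f x \<noteq> 0" by auto
  have "prodop E \<rho>s f = (\<lambda>_. 0)" using ann by (simp add: \<rho>s_def)
  then have "(\<Prod>\<rho>\<leftarrow>\<rho>s. c - \<rho>) * f x = 0" using prodop_eig[OF f(2), of \<rho>s] by (metis (no_types))
  then have "(\<Prod>\<rho>\<leftarrow>\<rho>s. c - \<rho>) = 0" using x by simp
  then show "c \<in> set \<rho>s" by (auto simp: prod_list_zero_iff)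
qed

lemma setL: "set L = Eig E" and distL: "distinct L"
  using Eig_sub by (auto simp: L_def)

lemma card_Eig: "card (Eig E) \<le> 5"
proof -
  have "card (Eig E) = length L" using setL distL distinct_card by metis
  also have "\<dots> \<le> length \<rho>s" unfolding L_def
    by (meson length_filter_le length_remdups_leq order_trans)
  also have "\<dots> \<le> 5" by (simp add: \<rho>s_def Pt_def)
  finally show ?thesis .
qed

lemma ann_list: "distinct xs \<Longrightarrow> set xs = Eig E \<Longrightarrow> prodop E xs f = (\<lambda>_. 0)"
  using L_ann prodop_mset[of L xs E f] setL distL set_eq_iff_mset_eq_distinct by metis

lemma cnt_step2: "step E \<theta> (step E \<theta>' (ind z)) x =
   real (card {y. E x y \<and> E y z}) - (\<theta> + \<theta>') * (if E x z then 1 else 0) + \<theta> * \<theta>' * (if x = z then 1 else 0)"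
  unfolding step2 Top_ind Top2_ind by (simp add: ind_def)


lemma finite_Eig: "finite (Eig E)" using Eig_sub finite_subset by blast

lemma comp_mem: "C \<in> components E \<longleftrightarrow> (\<exists>x. C = {y. E\<^sup>*\<^sup>* x y})"
  by (auto simp: components_def)

lemma two_comps:
  assumes "\<not> E\<^sup>*\<^sup>* x y"
  shows "card (components E) \<ge> 2"
proof -
  have sub: "{{w. E\<^sup>*\<^sup>* x w}, {w. E\<^sup>*\<^sup>* y w}} \<subseteq> components E" by (auto simp: components_def)
  have ne: "{w. E\<^sup>*\<^sup>* x w} \<noteq> {w. E\<^sup>*\<^sup>* y w}" using assms by auto
  have "card {{w. E\<^sup>*\<^sup>* x w}, {w. E\<^sup>*\<^sup>* y w}} = 2" using ne by simp
  moreover have "finite (components E)" by simp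
  ultimately show ?thesis using card_mono[OF _ sub] by simp
qed

lemma common_pos_conn:
  assumes "common UNIV E x z > 0"
  shows "E\<^sup>*\<^sup>* x z"
proof -
  have "{y. E x y \<and> E y z} \<noteq> {}" using assms common_eq[of x z] by (metis card.empty less_irrefl)
  then obtain y where "E x y" "E y z" by blast
  then show ?thesis by (meson converse_rtranclp_into_rtranclp r_into_rtranclp)
qed

lemma part2:
  assumes c2: "card (Eig E) = 2"
  shows "a = 0 \<and> b = k - 1 \<and> k - 1 \<ge> 1 \<and> card (components E) \<ge> 2 \<and>
           (\<forall>C\<in>components E. card C = k + 1 \<and> complete_on C E)"
proof -
  have "card (Eig E - {real k}) = 1" using c2 k_eig finite_Eig by simp
  then obtain \<theta> where th: "Eig E - {real k} = {\<theta>}" by (meson card_1_singletonE)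
  then have Eq: "Eig E = {real k, \<theta>}" and thk: "\<theta> \<noteq> real k" using k_eig by auto
  have ann2: "step E (real k) (step E \<theta> f) = (\<lambda>_. 0)" for f
    using ann_list[of "[real k, \<theta>]" f] Eq thk by simp
  have key: "real (card {y. E x y \<and> E y z}) - (real k + \<theta>) * (if E x z then 1 else 0)
      + real k * \<theta> * (if x = z then 1 else 0) = 0" for x z
    using fun_cong[OF ann2[of "ind z"], of x] cnt_step2[of "real k" \<theta> z x] by simp
  obtain x0 :: 'a where True by simp
  have "real k + real k * \<theta> = 0" using key[of x0 x0] cntE[of x0 x0] irrE[of x0] by simp
  then have "real k * (1 + \<theta>) = 0" by (simp add: algebra_simps)
  then have th1: "\<theta> = -1" using k_pos by simp
  have comE: "x \<noteq> z \<Longrightarrow> common UNIV E x z = (if E x z then k - 1 else 0)" for x z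
  proof -
    assume xz: "x \<noteq> z"
    have "real (common UNIV E x z) = (if E x z then real k - 1 else 0)"
      using key[of x z] xz th1 common_eq[of x z] by (auto simp: algebra_simps)
    then show ?thesis using k_pos by (auto simp: of_nat_diff)
  qed
  obtain xa ya where xya: "xa \<noteq> ya" "common UNIV E xa ya = a" using exA by blast
  obtain xb yb where xyb: "B xb yb" using exB by blast
  then have "xb \<noteq> yb" "common UNIV E xb yb = b" using Bdef by auto
  then have "b = k - 1 \<or> b = 0" using comE by (metis)
  moreover have "a = k - 1 \<or> a = 0" using comE xya by metis
  ultimately have abv: "a = 0" "b = k - 1" "k - 1 \<ge> 1" using ab by auto
  have clos: "E x z" if "E x y" "E y z" "x \<noteq> z" for x y z
  proof (rule ccontr)
    assume "\<not> E x z"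
    then have "common UNIV E x z = 0" using comE that(3) by simp
    moreover have "common UNIV E x z > 0" using that common_eq[of x z]
      by (metis (mono_tags, lifting) card_gt_0_iff empty_iff finite mem_Collect_eq)
    ultimately show False by simp
  qed
  have compx: "{y. E\<^sup>*\<^sup>* x y} = insert x {y. E x y}" for x
  proof
    show "{y. E\<^sup>*\<^sup>* x y} \<subseteq> insert x {y. E x y}"
    proof
      fix y assume "y \<in> {y. E\<^sup>*\<^sup>* x y}"
      then have "E\<^sup>*\<^sup>* x y" by simp
      then show "y \<in> insert x {y. E x y}"
      proof (induction rule: rtranclp_induct)
        case base then show ?case by simp
      next
        case (step y z)
        show ?case
        proof (cases "z = x")
          case True then show ?thesis by simp
        next
          case zx: False
          show ?thesis
          proof (cases "y = x")
            case True then show ?thesis using step.hyps(2) by simp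
          next
            case False
            then have "E x y" using step.IH by simp
            then show ?thesis using clos[OF _ step.hyps(2) zx[symmetric]] by simp
          qed
        qed
      qed
    qed
  next
    show "insert x {y. E x y} \<subseteq> {y. E\<^sup>*\<^sup>* x y}" by auto
  qed
  obtain x1 y1 where xy1: "x1 \<noteq> y1" "\<not> E x1 y1" using dz by (auto simp: deza_on_def complete_on_def)
  have "y1 \<notin> {y. E\<^sup>*\<^sup>* x1 y}" unfolding compx[of x1] using xy1 by simp
  then have "\<not> E\<^sup>*\<^sup>* x1 y1" by simp
  then have nc: "card (components E) \<ge> 2" by (rule two_comps)
  have "\<forall>C\<in>components E. card C = k + 1 \<and> complete_on C E"
  proof
    fix C assume "C \<in> components E"
    then obtain x where "C = {y. E\<^sup>*\<^sup>* x y}" unfolding comp_mem by blast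
    then have C: "C = insert x {y. E x y}" by (simp only: compx)
    have "card C = k + 1" using C regE[of x] irrE[of x] by simp
    moreover have "complete_on C E"
      unfolding complete_on_def C
    proof (intro ballI impI)
      fix u w assume u: "u \<in> insert x {y. E x y}" and w: "w \<in> insert x {y. E x y}" and uw: "u \<noteq> w"
      show "E u w"
      proof (cases "u = x")
        case True then show ?thesis using w uw by auto
      next
        case False
        then have Eu: "E u x" using u symE by auto
        show ?thesis
        proof (cases "w = x")
          case True then show ?thesis using Eu by simp
        next
          case False
          then have "E x w" using w by auto
          then show ?thesis using clos[OF Eu _ uw] by simp
        qed
      qed
    qed
    ultimately show "card C = k + 1 \<and> complete_on C E" by simp
  qed
  then show ?thesis using abv nc by simp
qed


end



context SD begin
lemma sum_step: "(\<Sum>x\<in>UNIV. step E \<rho> h x) = (real k - \<rho>) * (\<Sum>x\<in>UNIV. h x)"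
proof -
  have "(\<Sum>x\<in>UNIV. step E \<rho> h x) = (\<Sum>x\<in>UNIV. Top E h x - \<rho> * h x)"
    by (simp add: step_def)
  also have "\<dots> = (\<Sum>x\<in>UNIV. Top E h x) - \<rho> * (\<Sum>x\<in>UNIV. h x)"
    by (simp only: sum_subtractf sum_distrib_left)
  also have "\<dots> = (real k - \<rho>) * (\<Sum>x\<in>UNIV. h x)"
    by (simp only: sumE left_diff_distrib)
  finally show ?thesis .
qed

lemma srg_from_affine:
  assumes aff: "\<And>x z. x \<noteq> z \<Longrightarrow> real (common UNIV E x z) = \<kappa> + \<delta> * (if E x z then 1 else 0)"
  shows "\<exists>l m. srg_on UNIV E n k l m \<and> {l, m} = {a, b}"
proof -
  obtain x1 y1 where e1: "E x1 y1" using dz by (auto simp: deza_on_def edgeless_on_def)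
  then have n1: "x1 \<noteq> y1" using irrE by auto
  obtain x2 y2 where e2: "x2 \<noteq> y2" "\<not> E x2 y2" using dz by (auto simp: deza_on_def complete_on_def)
  define l where "l = common UNIV E x1 y1"
  define m where "m = common UNIV E x2 y2"
  have L: "common UNIV E x y = l" if "x \<noteq> y" "E x y" for x y
  proof -
    have "real (common UNIV E x y) = real l" using aff[OF that(1)] aff[OF n1] that e1 by (simp add: l_def)
    then show ?thesis by simp
  qed
  have M: "common UNIV E x y = m" if "x \<noteq> y" "\<not> E x y" for x y
  proof -
    have "real (common UNIV E x y) = real m" using aff[OF that(1)] aff[OF e2(1)] that e2 by (simp add: m_def)
    then show ?thesis by simp
  qed
  have srg: "srg_on UNIV E n k l m"
    using dz L M by (auto simp: srg_on_def deza_on_def)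
  have lab: "l = a \<or> l = b" using ab_cases[OF n1] by (simp add: l_def)
  have mab: "m = a \<or> m = b" using ab_cases[OF e2(1)] by (simp add: m_def)
  have "l \<noteq> m"
  proof
    assume lm: "l = m"
    then have all: "x \<noteq> y \<Longrightarrow> common UNIV E x y = l" for x y using L M by (cases "E x y") auto
    obtain xa ya where "xa \<noteq> ya" "common UNIV E xa ya = a" using exA by blast
    then have "a = l" using all by simp
    obtain xb yb where "B xb yb" using exB by blast
    then have "b = l" using all Bdef by auto
    show False using \<open>a = l\<close> \<open>b = l\<close> ab by simp
  qed
  then have "{l, m} = {a, b}" using lab mab by auto
  then show ?thesis using srg by blast
qed

lemma part3a:
  assumes c3: "card (Eig E) = 3"
  and noU: "\<not> (\<exists>g. g \<noteq> (\<lambda>_. 0) \<and> (\<Sum>y\<in>UNIV. g y) = 0 \<and> Top E g = (\<lambda>x. real k * g x))"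
  shows "\<exists>l m. srg_on UNIV E n k l m \<and> {l, m} = {a, b}"
proof -
  have "card (Eig E - {real k}) = 2" using c3 k_eig finite_Eig by simp
  then obtain \<theta> \<theta>' where th: "Eig E - {real k} = {\<theta>, \<theta>'}" "\<theta> \<noteq> \<theta>'" by (meson card_2_iff)
  then have Eq: "Eig E = {real k, \<theta>, \<theta>'}" and d: "distinct [real k, \<theta>, \<theta>']" using k_eig by auto
  have ann3: "step E (real k) (step E \<theta> (step E \<theta>' f)) = (\<lambda>_. 0)" for f
    using ann_list[OF d, of f] Eq by simp
  have U: "step E \<theta> (step E \<theta>' g) = (\<lambda>_. 0)" if g: "(\<Sum>y\<in>UNIV. g y) = 0" for g
  proof (rule ccontr)
    define Y where "Y = step E \<theta> (step E \<theta>' g)"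
    assume "step E \<theta> (step E \<theta>' g) \<noteq> (\<lambda>_. 0)"
    then have "Y \<noteq> (\<lambda>_. 0)" by (simp add: Y_def)
    moreover have "(\<Sum>y\<in>UNIV. Y y) = 0" by (simp add: Y_def sum_step g)
    moreover have "Top E Y = (\<lambda>x. real k * Y x)"
    proof
      fix x show "Top E Y x = real k * Y x" using fun_cong[OF ann3[of g], of x] by (simp add: Y_def step_def)
    qed
    ultimately show False using noU by blast
  qed
  define N where "N = real CARD('a)"
  have Npos: "N > 0" by (simp add: N_def)
  define \<kappa> where "\<kappa> = (1 / N) * ((real k - \<theta>) * (real k - \<theta>'))"
  have one: "Top E (\<lambda>_. 1) = (\<lambda>x. real k * 1)" by (rule ext) (simp add: Top_const regE)
  have val: "step E \<theta> (step E \<theta>' (ind z)) x = \<kappa>" for z x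
  proof -
    define g where "g = (\<lambda>y. ind z y - (1 / N) * 1)"
    have "(\<Sum>y\<in>UNIV. g y) = 1 - N * (1 / N)"
      by (simp add: g_def sum_subtractf ind_def N_def)
    then have gs: "(\<Sum>y\<in>UNIV. g y) = 0" using Npos by simp
    have e1: "prodop E [\<theta>, \<theta>'] g = (\<lambda>x. prodop E [\<theta>, \<theta>'] (ind z) x - (1 / N) * prodop E [\<theta>, \<theta>'] (\<lambda>_. 1) x)"
      unfolding g_def by (rule prodop_lin)
    have e2: "prodop E [\<theta>, \<theta>'] (\<lambda>_. 1) = (\<lambda>x. (\<Prod>\<rho>\<leftarrow>[\<theta>, \<theta>']. real k - \<rho>) * 1)"
      by (rule prodop_eig[OF one])
    have e3: "prodop E [\<theta>, \<theta>'] g = (\<lambda>_. 0)" using U[OF gs] by simp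
    have "prodop E [\<theta>, \<theta>'] (ind z) x - (1 / N) * ((real k - \<theta>) * (real k - \<theta>')) = 0"
      using fun_cong[OF e1, of x] fun_cong[OF e2, of x] fun_cong[OF e3, of x] by simp
    then have "step E \<theta> (step E \<theta>' (ind z)) x = \<kappa>" by (simp add: \<kappa>_def)
    then show ?thesis .
  qed
  have aff: "real (common UNIV E x z) = \<kappa> + (\<theta> + \<theta>') * (if E x z then 1 else 0)" if "x \<noteq> z" for x z
    using val[of z x] cnt_step2[of \<theta> \<theta>' z x] that common_eq[of x z] by simp
  show ?thesis by (rule srg_from_affine[OF aff])
qed

end



lemma Top_set: "Top R f x = (\<Sum>y\<in>{y. R x y}. f y)"
proof -
  have "(\<Sum>y\<in>{y\<in>UNIV. R x y}. f y) = (\<Sum>y\<in>UNIV. if R x y then f y else 0)"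
    by (rule sum.inter_filter) simp
  then show ?thesis by (simp add: Top_def)
qed

context SD begin

lemma maxprinc:
  assumes g0: "g \<noteq> (\<lambda>_. 0)" and gs: "(\<Sum>y\<in>UNIV. g y) = 0" and ge: "Top E g = (\<lambda>x. real k * g x)"
  shows "\<exists>x0 y0. \<not> E\<^sup>*\<^sup>* x0 y0"
proof -
  define M where "M = Max (range g)"
  have leM: "g y \<le> M" for y unfolding M_def by (rule Max_ge) auto
  have "M \<in> range g" unfolding M_def by (rule Max_in) auto
  then obtain x0 where x0: "g x0 = M" by auto
  have clos: "g y = M" if "g x = M" "E x y" for x y
  proof -
    have "(\<Sum>w\<in>{w. E x w}. g w) = real k * M" using fun_cong[OF ge, of x] that(1) by (simp add: Top_set)
    moreover have "(\<Sum>w\<in>{w. E x w}. M) = real k * M" using regE[of x] by simp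
    ultimately have "(\<Sum>w\<in>{w. E x w}. M - g w) = 0" by (simp add: sum_subtractf)
    moreover have "\<forall>w\<in>{w. E x w}. M - g w \<ge> 0" using leM by simp
    ultimately have "\<forall>w\<in>{w. E x w}. M - g w = 0" using sum_nonneg_eq_0_iff[of "{w. E x w}" "\<lambda>w. M - g w"] by simp
    then show ?thesis using that(2) by simp
  qed
  have inS: "E\<^sup>*\<^sup>* x0 y \<Longrightarrow> g y = M" for y
  proof (induction rule: rtranclp_induct)
    case base then show ?case by (rule x0)
  next
    case (step y z) then show ?case using clos by blast
  qed
  have "\<exists>y0. g y0 \<noteq> M"
  proof (rule ccontr)
    assume "\<not> (\<exists>y0. g y0 \<noteq> M)"
    then have gM: "g = (\<lambda>_. M)" by auto
    then have "real CARD('a) * M = 0" using gs by simp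
    then have "M = 0" by simp
    then show False using g0 gM by simp
  qed
  then obtain y0 where "g y0 \<noteq> M" by blast
  then show ?thesis using inS by blast
qed

lemma disc_facts:
  assumes "\<not> E\<^sup>*\<^sup>* x0 y0"
  shows "a = 0" "mB = 0" "card (components E) \<ge> 2"
proof -
  have xy: "x0 \<noteq> y0" using assms by auto
  have c0: "common UNIV E x0 y0 = 0" using common_pos_conn assms by blast
  show a0: "a = 0" using ab_cases[OF xy] c0 ab by auto
  show "card (components E) \<ge> 2" using two_comps[OF assms] .
  have nB: "\<not> B x0 y0" using c0 ab Bdef by auto
  have "{w. B x0 w \<and> B w y0} = {}"
  proof (rule ccontr)
    assume "{w. B x0 w \<and> B w y0} \<noteq> {}"
    then obtain w where w: "B x0 w" "B w y0" by blast
    have "E\<^sup>*\<^sup>* x0 w" using w(1) Bdef ab common_pos_conn by auto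
    moreover have "E\<^sup>*\<^sup>* w y0" using w(2) Bdef ab common_pos_conn by auto
    ultimately show False using assms by (meson rtranclp_trans)
  qed
  moreover have "card {w. B x0 w \<and> B w y0} = mB" using cntB[of x0 y0] xy nB by simp
  ultimately show "mB = 0" by (metis card.empty)
qed

end



locale SD0 = SD +
  assumes a0: "a = 0" and m0: "mB = 0"
begin

lemma b_pos: "b > 0" using ab a0 by simp

lemma Btrans: "B x y \<Longrightarrow> B y z \<Longrightarrow> x \<noteq> z \<Longrightarrow> B x z"
proof (rule ccontr)
  assume h: "B x y" "B y z" "x \<noteq> z" "\<not> B x z"
  then have "card {w. B x w \<and> B w z} = 0" using cntB[of x z] m0 by simp
  moreover have "y \<in> {w. B x w \<and> B w z}" using h by simp
  ultimately show False by (metis card_0_eq empty_iff finite)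
qed

definition Q where "Q x = {y. y = x \<or> B x y}"

lemma Q_self: "x \<in> Q x" by (simp add: Q_def)

lemma Q_ins: "Q x = insert x {y. B x y}" by (auto simp: Q_def)

lemma Q_same: assumes "w \<in> Q x" shows "Q w = Q x"
proof (cases "w = x")
  case True then show ?thesis by simp
next
  case False
  then have bxw: "B x w" using assms by (simp add: Q_def)
  then have bwx: "B w x" using symB by blast
  show ?thesis
  proof (rule set_eqI)
    fix y
    show "y \<in> Q w \<longleftrightarrow> y \<in> Q x"
    proof
      assume "y \<in> Q w"
      then have "y = w \<or> B w y" by (simp add: Q_def)
      then show "y \<in> Q x"
      proof
        assume "y = w" then show ?thesis using bxw by (simp add: Q_def)
      next
        assume bwy: "B w y"
        show ?thesis
        proof (cases "y = x")
          case True then show ?thesis by (simp add: Q_def)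
        next
          case False then show ?thesis using Btrans[OF bxw bwy] by (simp add: Q_def)
        qed
      qed
    next
      assume "y \<in> Q x"
      then have "y = x \<or> B x y" by (simp add: Q_def)
      then show "y \<in> Q w"
      proof
        assume "y = x" then show ?thesis using bwx by (simp add: Q_def)
      next
        assume bxy: "B x y"
        show ?thesis
        proof (cases "y = w")
          case True then show ?thesis by (simp add: Q_def)
        next
          case False then show ?thesis using Btrans[OF bwx bxy] by (simp add: Q_def)
        qed
      qed
    qed
  qed
qed

lemma card_Q: "card (Q x) = kB + 1"
  using regB[of x] irrB[of x] by (simp add: Q_ins)

lemma B_conn: "B x y \<Longrightarrow> E\<^sup>*\<^sup>* x y"
  using Bdef ab common_pos_conn by auto

lemma Q_conn: "y \<in> Q x \<Longrightarrow> E\<^sup>*\<^sup>* x y"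
  using B_conn by (auto simp: Q_def)

lemma sumQ: "(\<Sum>y\<in>Q x. f y) = f x + Top B f x"
  using irrB[of x] by (simp add: Q_ins Top_set)

lemma E2z: "Top E (Top E f) x = real k * f x + real b * Top B f x"
  using E2[of f x] a0 by simp

lemma kB_pos: "kB > 0"
proof -
  obtain x y where "B x y" using exB by blast
  then have "0 < card {y. B x y}" by (intro card_gt_0_iff[THEN iffD2]) auto
  then show ?thesis using regB by simp
qed

lemma Bev:
  assumes ev: "Top B f = (\<lambda>x. r * f x)" and fx: "f x \<noteq> 0"
  shows "r = real kB \<or> r = -1"
proof (cases "r = -1")
  case True then show ?thesis by simp
next
  case False
  have sQ: "(\<Sum>y\<in>Q w. f y) = (1 + r) * f w" for w using sumQ[of f w] ev by (simp add: algebra_simps)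
  have eqx: "f w = f x" if "w \<in> Q x" for w
  proof -
    have "(1 + r) * f w = (1 + r) * f x" using sQ[of w] sQ[of x] Q_same[OF that] by metis
    moreover have "1 + r \<noteq> 0" using False by linarith
    ultimately show ?thesis by simp
  qed
  have "Top B f x = (\<Sum>y\<in>{y. B x y}. f x)"
    unfolding Top_set by (rule sum.cong) (auto intro: eqx simp: Q_def)
  then have "Top B f x = real kB * f x" using regB[of x] by simp
  then have "r * f x = real kB * f x" using ev by simp
  then show ?thesis using fx by simp
qed

lemma const_on_Q:
  assumes ev: "\<And>x. Top B Y x = real kB * Y x" and w: "w \<in> Q x"
  shows "Y w = Y x"
proof -
  have sQ: "(\<Sum>y\<in>Q v. Y y) = (1 + real kB) * Y v" for v using sumQ[of Y v] ev by (simp add: algebra_simps)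
  have "(1 + real kB) * Y w = (1 + real kB) * Y x" using sQ[of w] sQ[of x] Q_same[OF w] by simp
  then show ?thesis by (simp add: add_pos_nonneg)
qed

lemma kk: "real k ^ 2 = real k + real b * real kB"
proof -
  have one: "Top E (\<lambda>_. 1) = (\<lambda>x. real k)" by (rule ext) (simp add: Top_const regE)
  have "Top E (Top E (\<lambda>_. 1)) x = real k * real k" for x
    unfolding one by (simp add: Top_const regE)
  moreover have "Top B (\<lambda>_. 1) x = real kB" for x by (simp add: Top_const regB)
  ultimately show ?thesis using E2z[of "\<lambda>_. 1"] by (simp add: power2_eq_square)
qed

lemma Eig_sq:
  assumes "c \<in> Eig E"
  shows "c^2 = real k ^ 2 \<or> c^2 = real k - real b"
proof -
  obtain f where f: "f \<noteq> (\<lambda>_. 0)" "Top E f = (\<lambda>x. c * f x)" using assms by (auto simp: Eig_def)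
  then obtain x where fx: "f x \<noteq> 0" by auto
  have T2: "Top E (Top E f) y = c^2 * f y" for y
    unfolding f(2) by (simp add: Top_scale f(2) power2_eq_square)
  have "Top B f = (\<lambda>y. ((c^2 - real k) / real b) * f y)"
  proof
    fix y
    have "c^2 * f y = real k * f y + real b * Top B f y" using T2[of y] E2z[of f y] by simp
    then show "Top B f y = ((c^2 - real k) / real b) * f y" using b_pos by (simp add: field_simps)
  qed
  from Bev[OF this fx] show ?thesis
  proof
    assume "(c^2 - real k) / real b = real kB"
    then have "c^2 = real k + real b * real kB" using b_pos by (simp add: field_simps)
    then show ?thesis using kk by simp
  next
    assume "(c^2 - real k) / real b = -1"
    then have "c^2 = real k - real b" using b_pos by (simp add: field_simps)
    then show ?thesis by simp
  qed
qed

lemma EB_card: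
  assumes EB: "\<And>x y. E x y \<longleftrightarrow> B x y"
  shows "card (Eig E) \<le> 2"
proof -
  have "Eig E \<subseteq> {x::real. x^2 = real k + real b * x}"
  proof
    fix c assume "c \<in> Eig E"
    then obtain f where f: "f \<noteq> (\<lambda>_. 0)" "Top E f = (\<lambda>x. c * f x)" by (auto simp: Eig_def)
    then obtain x where fx: "f x \<noteq> 0" by auto
    have TB: "Top B f = Top E f" unfolding Top_def using EB by simp
    have "c^2 * f x = real k * f x + real b * (c * f x)"
      using E2z[of f x] TB f(2) by (simp add: Top_scale power2_eq_square)
    then have "(c^2 - (real k + real b * c)) * f x = 0" by (simp add: algebra_simps)
    then have "c^2 = real k + real b * c" using fx by simp
    then show "c \<in> {x::real. x^2 = real k + real b * x}" by simp
  qed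
  then show ?thesis using quad_card[of "real k" "real b"] by (meson card_mono le_trans)
qed

lemma cntE0: "card {y. E x y \<and> E y z} = (if x = z then k else if B x z then b else 0)"
  using cntE a0 by simp

end



context SD0 begin

lemma Top_qi: "Top E (\<lambda>y. if y \<in> S then 1 else 0) x = real (card {w. E x w \<and> w \<in> S})"
  unfolding Top_def using sum_if_const[of "\<lambda>w. E x w \<and> w \<in> S" 1]
  by (simp add: if_distrib cong: if_cong) (smt (verit, best) sum.cong)

lemma NQ_from:
  assumes h: "\<And>y z. y \<in> Q z \<Longrightarrow> card {w. E y w \<and> w \<in> Q z} = k"
  shows "{w. E y w} \<subseteq> Q y"
proof -
  have "{w. E y w \<and> w \<in> Q y} = {w. E y w}"
    by (rule card_subset_eq) (auto simp: h[OF Q_self] regE)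
  then show ?thesis by blast
qed

lemma comp_Q:
  assumes NQ: "\<And>y. {w. E y w} \<subseteq> Q y"
  shows "{w. E\<^sup>*\<^sup>* x w} = Q x"
proof
  show "{w. E\<^sup>*\<^sup>* x w} \<subseteq> Q x"
  proof
    fix w assume "w \<in> {w. E\<^sup>*\<^sup>* x w}"
    then have "E\<^sup>*\<^sup>* x w" by simp
    then show "w \<in> Q x"
    proof (induction rule: rtranclp_induct)
      case base then show ?case by (rule Q_self)
    next
      case (step y z)
      then have "z \<in> Q y" using NQ by blast
      then show ?case using Q_same[OF step.IH] by simp
    qed
  qed
next
  show "Q x \<subseteq> {w. E\<^sup>*\<^sup>* x w}" using Q_conn by blast
qed

lemma alpha:
  assumes c3: "card (Eig E) = 3" and Eq: "Eig E = {real k, s, -s}"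
  and s: "s = sqrt (real k - real b)" and kb: "real b \<le> real k"
  shows "\<forall>C\<in>components E. \<exists>v. srg_on C E v k b b"
proof -
  have "card (set [real k, s, -s]) = length [real k, s, -s]" using c3 Eq by simp
  then have d: "distinct [real k, s, -s]" by (rule card_distinct)
  define t where "t = real k - real b"
  have t0: "t \<ge> 0" using kb by (simp add: t_def)
  have st: "sqrt t = s" by (simp add: s t_def)
  have an: "step E (real k) (sq E t (ind z)) = (\<lambda>_. 0)" for z
    using ann_list[OF d, of "ind z"] Eq sq_as_step[OF t0, of E "ind z"] st by simp
  have sqv: "sq E t (ind z) = (\<lambda>x. real b * (if x \<in> Q z then 1 else 0))" for z
  proof
    fix x
    show "sq E t (ind z) x = real b * (if x \<in> Q z then 1 else 0)"
      unfolding sq_def Top2_ind cntE0 using symB[of x z] symB[of z x]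
      by (auto simp: t_def ind_def Q_def)
  qed
  have h: "card {w. E y w \<and> w \<in> Q z} = k" if "y \<in> Q z" for y z
  proof -
    have "Top E (\<lambda>x. real b * (if x \<in> Q z then 1 else 0)) y = real k * (real b * (if y \<in> Q z then 1 else 0))"
      using fun_cong[OF an[of z], of y] unfolding sqv step_def by simp
    then have "real b * Top E (\<lambda>x. if x \<in> Q z then 1 else 0) y = real b * real k"
      using that by (simp add: Top_scale)
    then have "Top E (\<lambda>x. if x \<in> Q z then 1 else 0) y = real k" using b_pos by simp
    then show ?thesis by (simp add: Top_qi)
  qed
  have NQ: "{w. E y w} \<subseteq> Q y" for y by (rule NQ_from[OF h])
  have EB_no: "\<not> (\<forall>x y. E x y \<longleftrightarrow> B x y)"
    using EB_card c3 by (metis numeral_le_iff semiring_norm(69) semiring_norm(72) le_antisym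
      Suc_n_not_le_n eval_nat_numeral(3) numeral_2_eq_2)
  show ?thesis
  proof
    fix C assume "C \<in> components E"
    then obtain x where "C = {w. E\<^sup>*\<^sup>* x w}" unfolding comp_mem by blast
    then have C: "C = Q x" using comp_Q[OF NQ] by simp
    have Ny: "{w. E y w} \<subseteq> Q x" if "y \<in> Q x" for y using NQ[of y] Q_same[OF that] by simp
    have nb: "nbrs (Q x) E y = {w. E y w}" if "y \<in> Q x" for y
      using Ny[OF that] by (auto simp: nbrs_def)
    have reg: "regular_on (Q x) E k" unfolding regular_on_def using nb regE by simp
    have cm: "common (Q x) E y w = common UNIV E y w" if "y \<in> Q x" for y w
    proof -
      have "{z \<in> Q x. E y z \<and> E w z} = {z \<in> UNIV. E y z \<and> E w z}" using Ny[OF that] by blast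
      then show ?thesis by (simp add: common_def)
    qed
    have pairs: "common (Q x) E y w = b" if "y \<in> Q x" "w \<in> Q x" "y \<noteq> w" for y w
    proof -
      have "w \<in> Q y" using that Q_same by simp
      then have "B y w" using that(3) by (simp add: Q_def)
      then show ?thesis using cm[OF that(1)] Bdef by simp
    qed
    have ne: "\<not> edgeless_on (Q x) E"
    proof -
      have "{w. E x w} \<noteq> {}" using regE[of x] k_pos by (metis card.empty less_irrefl)
      then obtain w where "E x w" by blast
      then show ?thesis using Ny[OF Q_self] Q_self unfolding edgeless_on_def by blast
    qed
    have nc: "\<not> complete_on (Q x) E"
    proof
      assume comp: "complete_on (Q x) E"
      have "{w. E x w} = {w. B x w}"
      proof
        show "{w. E x w} \<subseteq> {w. B x w}" using NQ[of x] irrE[of x] by (auto simp: Q_def)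
        show "{w. B x w} \<subseteq> {w. E x w}" using comp irrB Q_self unfolding complete_on_def Q_def by auto
      qed
      then have kkB: "k = kB" using regE[of x] regB[of x] by simp
      have "E y w \<longleftrightarrow> B y w" for y w
      proof -
        have sub: "{w. E y w} \<subseteq> {w. B y w}" using NQ[of y] irrE[of y] by (auto simp: Q_def)
        have "{w. E y w} = {w. B y w}"
          by (rule card_subset_eq[OF _ sub]) (simp_all add: regE regB kkB)
        then show ?thesis by blast
      qed
      then show False using EB_no by blast
    qed
    have "srg_on (Q x) E (card (Q x)) k b b"
      unfolding srg_on_def using reg ne nc pairs by blast
    then show "\<exists>v. srg_on C E v k b b" using C by blast
  qed
qed

end



context SD0 begin

lemma no_common:
  assumes "x \<noteq> y" "\<not> B x y" "E x v" "E v y"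
  shows False
proof -
  have "common UNIV E x y = 0" using ab_cases[OF assms(1)] assms(2) a0 Bdef assms(1) by auto
  moreover have "v \<in> {z. E x z \<and> E z y}" using assms by simp
  ultimately show False using common_eq[of x y] by (metis card_0_eq empty_iff finite)
qed

lemma beta:
  assumes c3: "card (Eig E) = 3" and Eq: "Eig E = {real k, - real k, c0}"
  and d: "distinct [real k, - real k, c0]"
  shows "k \<ge> 2 \<and> (\<forall>C\<in>components E. complete_bipartite_on C E k)"
proof -
  define Y where "Y z = step E c0 (ind z)" for z
  have Yv: "Y z x = (if E x z then 1 else 0) - c0 * (if x = z then 1 else 0)" for z x
    unfolding Y_def step_def Top_ind by (simp add: ind_def)
  have t0: "real k ^ 2 \<ge> 0" by simp
  have sk: "sqrt (real k ^ 2) = real k" by simp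
  have an: "sq E (real k ^ 2) (Y z) = (\<lambda>_. 0)" for z
    using ann_list[OF d, of "ind z"] Eq sq_as_step[OF t0, of E "Y z"] unfolding sk Y_def by simp
  have TBY: "Top B (Y z) x = real kB * Y z x" for z x
  proof -
    have "Top E (Top E (Y z)) x - real k ^ 2 * Y z x = 0" using fun_cong[OF an[of z], of x] by (simp add: sq_def)
    then have "real k * Y z x + real b * Top B (Y z) x - (real k + real b * real kB) * Y z x = 0"
      using E2z[of "Y z" x] kk by simp
    then have "real b * (Top B (Y z) x - real kB * Y z x) = 0" by (simp add: algebra_simps)
    then show ?thesis using b_pos by simp
  qed
  have cQ: "Y z w = Y z x" if "w \<in> Q x" for z w x by (rule const_on_Q[OF TBY that])
  have hB: "(if E w z then 1 else 0) = - c0" if "B z w" for z w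
  proof -
    have "w \<noteq> z" using that irrB by auto
    have "w \<in> Q z" using that by (simp add: Q_def)
    then have "Y z w = Y z z" by (rule cQ)
    then show ?thesis using \<open>w \<noteq> z\<close> irrE[of z] by (simp add: Yv)
  qed
  have two: "E x z \<longleftrightarrow> E x' z" if "x' \<in> Q x" "z \<notin> Q x" for x x' z
  proof -
    have "x \<noteq> z" using that Q_self by auto
    have "x' \<noteq> z" using that by auto
    have "Y z x' = Y z x" using cQ[OF that(1)] .
    then show ?thesis using \<open>x \<noteq> z\<close> \<open>x' \<noteq> z\<close> by (simp add: Yv split: if_splits)
  qed
  have exw: "\<exists>w. B y w" for y
  proof -
    have "{w. B y w} \<noteq> {}" using regB[of y] kB_pos by (metis card.empty less_irrefl)
    then show ?thesis by blast
  qed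
  obtain z0 w0 where "B z0 w0" using exB by blast
  then have c0v: "c0 = 0 \<or> c0 = -1" using hB[of z0 w0] by (auto split: if_splits)
  have EB_no: "\<not> (\<forall>x y. E x y \<longleftrightarrow> B x y)"
    using EB_card c3 by (metis numeral_le_iff semiring_norm(69) semiring_norm(72) le_antisym
      Suc_n_not_le_n eval_nat_numeral(3) numeral_2_eq_2)
  have c00: "c0 = 0"
  proof (rule ccontr)
    assume "c0 \<noteq> 0"
    then have cm1: "c0 = -1" using c0v by simp
    have BE: "B y w \<Longrightarrow> E y w" for y w using hB[of y w] cm1 symE by (auto split: if_splits)
    have EB: "E y z \<Longrightarrow> B y z" for y z
    proof (rule ccontr)
      assume eyz: "E y z" and nb: "\<not> B y z"
      have yz: "y \<noteq> z" using eyz irrE by auto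
      then have zQ: "z \<notin> Q y" using nb by (simp add: Q_def)
      obtain w where byw: "B y w" using exw by blast
      then have wQ: "w \<in> Q y" by (simp add: Q_def)
      have ewz: "E w z" using two[OF wQ zQ] eyz by simp
      show False using no_common[OF yz nb BE[OF byw] ewz] .
    qed
    show False using EB_no BE EB by blast
  qed
  have hB0: "B z w \<Longrightarrow> \<not> E z w" for z w using hB[of z w] c00 symE by (auto split: if_splits)
  have noEQ: "w \<in> Q z \<Longrightarrow> \<not> E z w" for z w using hB0 irrE by (auto simp: Q_def)
  have N1: "z \<notin> Q u" if "E z u" for z u
  proof
    assume "z \<in> Q u"
    then have "Q z = Q u" by (rule Q_same)
    then have "u \<in> Q z" using Q_self by simp
    then show False using noEQ that by blast
  qed
  have N2: "{w. E z w} = Q u" if ezu: "E z u" for z u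
  proof
    show "Q u \<subseteq> {w. E z w}"
    proof
      fix u' assume u': "u' \<in> Q u"
      have "E u z" using ezu symE by blast
      then have "E u' z" using two[OF u' N1[OF ezu]] by simp
      then show "u' \<in> {w. E z w}" using symE by blast
    qed
    show "{w. E z w} \<subseteq> Q u"
    proof
      fix v assume "v \<in> {w. E z w}"
      then have ezv: "E z v" by simp
      show "v \<in> Q u"
      proof (rule ccontr)
        assume vn: "v \<notin> Q u"
        then have uv: "u \<noteq> v" "\<not> B u v" by (auto simp: Q_def)
        show False using no_common[OF uv] ezu ezv symE by blast
      qed
    qed
  qed
  have N3: "{w. E x w} = {w. E z w}" if xz: "x \<in> Q z" for x z
  proof (rule set_eqI)
    fix w
    show "w \<in> {w. E x w} \<longleftrightarrow> w \<in> {w. E z w}"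
    proof (cases "w \<in> Q z")
      case True
      have "w \<in> Q x" using True Q_same[OF xz] by simp
      then show ?thesis using noEQ True by blast
    next
      case False
      have "E z w \<longleftrightarrow> E x w" using two[OF xz False] .
      then show ?thesis by simp
    qed
  qed
  have kB1: "k = kB + 1"
  proof -
    obtain z :: 'a where True by simp
    have "{w. E z w} \<noteq> {}" using regE[of z] k_pos by (metis card.empty less_irrefl)
    then obtain u where "E z u" by blast
    then have "{w. E z w} = Q u" by (rule N2)
    then show ?thesis using regE[of z] card_Q[of u] by simp
  qed
  have "\<forall>C\<in>components E. complete_bipartite_on C E k"
  proof
    fix C assume "C \<in> components E"
    then obtain z where Cz: "C = {w. E\<^sup>*\<^sup>* z w}" unfolding comp_mem by blast
    have "{w. E z w} \<noteq> {}" using regE[of z] k_pos by (metis card.empty less_irrefl)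
    then obtain u where ezu: "E z u" by blast
    have NZ: "{w. E z w} = Q u" by (rule N2[OF ezu])
    have NU: "{w. E u w} = Q z" using N2[of u z] ezu symE by blast
    have NX: "x \<in> Q z \<Longrightarrow> {w. E x w} = Q u" for x using N3 NZ by simp
    have NY: "y \<in> Q u \<Longrightarrow> {w. E y w} = Q z" for y using N3 NU by simp
    have disj: "Q z \<inter> Q u = {}"
    proof (rule ccontr)
      assume "Q z \<inter> Q u \<noteq> {}"
      then obtain w where "w \<in> Q z" "w \<in> Q u" by blast
      then have "Q z = Q u" using Q_same by metis
      then show False using N1[OF ezu] Q_self[of z] by simp
    qed
    have CXY: "C = Q z \<union> Q u"
    proof
      show "C \<subseteq> Q z \<union> Q u"
      proof
        fix w assume "w \<in> C"
        then have "E\<^sup>*\<^sup>* z w" using Cz by simp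
        then show "w \<in> Q z \<union> Q u"
        proof (induction rule: rtranclp_induct)
          case base then show ?case using Q_self by simp
        next
          case (step y v)
          then show ?case
          proof (cases "y \<in> Q z")
            case True then show ?thesis using NX[OF True] step.hyps(2) by blast
          next
            case False then have "y \<in> Q u" using step.IH by simp
            then show ?thesis using NY step.hyps(2) by blast
          qed
        qed
      qed
      show "Q z \<union> Q u \<subseteq> C"
      proof
        fix w assume "w \<in> Q z \<union> Q u"
        then show "w \<in> C"
        proof
          assume "w \<in> Q z" then show ?thesis using Q_conn Cz by simp
        next
          assume "w \<in> Q u"
          then have "E\<^sup>*\<^sup>* u w" by (rule Q_conn)
          then have "E\<^sup>*\<^sup>* z w" using ezu by (meson converse_rtranclp_into_rtranclp)
          then show ?thesis using Cz by simp
        qed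
      qed
    qed
    show "complete_bipartite_on C E k"
      unfolding complete_bipartite_on_def
    proof (intro exI conjI)
      show "Q z \<inter> Q u = {}" by (rule disj)
      show "Q z \<union> Q u = C" using CXY by simp
      show "card (Q z) = k" using card_Q kB1 by simp
      show "card (Q u) = k" using card_Q kB1 by simp
      show "\<forall>x\<in>C. \<forall>y\<in>C. E x y = (x \<in> Q z \<and> y \<in> Q u \<or> x \<in> Q u \<and> y \<in> Q z)"
      proof (intro ballI)
        fix x y assume x: "x \<in> C" and y: "y \<in> C"
        show "E x y = (x \<in> Q z \<and> y \<in> Q u \<or> x \<in> Q u \<and> y \<in> Q z)"
        proof (cases "x \<in> Q z")
          case True
          then have "x \<notin> Q u" using disj by blast
          moreover have "E x y \<longleftrightarrow> y \<in> Q u" using NX[OF True] by blast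
          ultimately show ?thesis using True by blast
        next
          case False
          then have xu: "x \<in> Q u" using x CXY by blast
          have "E x y \<longleftrightarrow> y \<in> Q z" using NY[OF xu] by blast
          then show ?thesis using False xu by blast
        qed
      qed
    qed
  qed
  moreover have "k \<ge> 2" using kB1 kB_pos by simp
  ultimately show ?thesis by simp
qed

end



context SD0 begin

lemma part3b:
  assumes c3: "card (Eig E) = 3" and nc: "card (components E) \<ge> 2"
  shows "(card (components E) \<ge> 2 \<and> (\<forall>C\<in>components E. \<exists>v. srg_on C E v k b b)) \<or>
         (k \<ge> 2 \<and> (\<forall>C\<in>components E. complete_bipartite_on C E k))"
proof -
  have "\<not> Eig E \<subseteq> {real k, - real k}"
  proof
    assume "Eig E \<subseteq> {real k, - real k}"
    then have "card (Eig E) \<le> card {real k, - real k}" by (intro card_mono) auto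
    also have "\<dots> \<le> 2" by (simp add: card_insert_le_m1)
    finally show False using c3 by simp
  qed
  then obtain c0 where c0: "c0 \<in> Eig E" "c0 \<noteq> real k" "c0 \<noteq> - real k" by blast
  have c0sq: "c0^2 = real k - real b"
  proof -
    have "c0^2 \<noteq> real k ^ 2"
    proof
      assume "c0^2 = real k ^ 2"
      then have "c0 = real k \<or> c0 = - real k" by (simp add: power2_eq_iff)
      then show False using c0 by simp
    qed
    then show ?thesis using Eig_sq[OF c0(1)] by simp
  qed
  have kb: "real b \<le> real k" using c0sq by (metis diff_ge_0_iff_ge zero_le_power2)
  define s where "s = sqrt (real k - real b)"
  have sq_s: "c^2 = real k - real b \<Longrightarrow> c = s \<or> c = - s" for c
  proof -
    assume "c^2 = real k - real b"
    then have "sqrt (c^2) = s" by (simp add: s_def)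
    then have "\<bar>c\<bar> = s" by simp
    then show "c = s \<or> c = - s" by auto
  qed
  have kpos: "real k > 0" using k_pos by simp
  show ?thesis
  proof (cases "- real k \<in> Eig E")
    case True
    have sub: "{real k, - real k, c0} \<subseteq> Eig E" using True k_eig c0 by auto
    have d: "distinct [real k, - real k, c0]" using c0 kpos by auto
    have "card {real k, - real k, c0} = 3" using d by simp
    then have "{real k, - real k, c0} = Eig E" using card_subset_eq[OF finite_Eig sub] c3 by simp
    then have "k \<ge> 2 \<and> (\<forall>C\<in>components E. complete_bipartite_on C E k)"
      using beta[OF c3 _ d] by simp
    then show ?thesis by simp
  next
    case False
    have sub: "Eig E \<subseteq> {real k, s, - s}"
    proof
      fix c assume c: "c \<in> Eig E"
      show "c \<in> {real k, s, - s}"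
      proof (cases "c = real k")
        case True then show ?thesis by simp
      next
        case ck: False
        have "c \<noteq> - real k" using c False by auto
        then have "c^2 \<noteq> real k ^ 2" using ck by (simp add: power2_eq_iff)
        then have "c^2 = real k - real b" using Eig_sq[OF c] by simp
        then show ?thesis using sq_s by auto
      qed
    qed
    have "card {real k, s, - s} \<le> 3" by (simp add: card_insert_le_m1)
    then have Eq: "Eig E = {real k, s, - s}" using card_seteq[OF _ sub] c3 by simp
    have "\<forall>C\<in>components E. \<exists>v. srg_on C E v k b b"
      using alpha[OF c3 Eq s_def kb] .
    then show ?thesis using nc by simp
  qed
qed

end

context SD begin

lemma part3:
  assumes c3: "card (Eig E) = 3"
  shows "(\<exists>l m. srg_on UNIV E n k l m \<and> {l, m} = {a, b}) \<or>
         (card (components E) \<ge> 2 \<and> (\<forall>C\<in>components E. \<exists>v. srg_on C E v k b b)) \<or>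
         (k \<ge> 2 \<and> (\<forall>C\<in>components E. complete_bipartite_on C E k))"
proof (cases "\<exists>g. g \<noteq> (\<lambda>_. 0) \<and> (\<Sum>y\<in>UNIV. g y) = 0 \<and> Top E g = (\<lambda>x. real k * g x)")
  case False
  then show ?thesis using part3a[OF c3] by blast
next
  case True
  then obtain g where g: "g \<noteq> (\<lambda>_. 0)" "(\<Sum>y\<in>UNIV. g y) = 0" "Top E g = (\<lambda>x. real k * g x)" by blast
  obtain x0 y0 where xy: "\<not> E\<^sup>*\<^sup>* x0 y0" using maxprinc[OF g] by blast
  note df = disc_facts[OF xy]
  interpret SD0 E n k b a nB kB lB mB by unfold_locales (use df in simp_all)
  show ?thesis using part3b[OF c3 df(3)] by blast
qed

end

theorem proposition1:
  fixes E :: "'a::finite \<Rightarrow> 'a \<Rightarrow> bool" and n k b a :: nat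
  assumes "strongly_deza E n k b a"
  shows "card (eigenvalues E) \<le> 5 \<and>
         (card (eigenvalues E) = 2 \<longrightarrow>
           a = 0 \<and> b = k - 1 \<and> k - 1 \<ge> 1 \<and> card (components E) \<ge> 2 \<and>
           (\<forall>C\<in>components E. card C = k + 1 \<and> complete_on C E)) \<and>
         (card (eigenvalues E) = 3 \<longrightarrow>
           (\<exists>l m. srg_on UNIV E n k l m \<and> {l, m} = {a, b}) \<or>
           (card (components E) \<ge> 2 \<and> (\<forall>C\<in>components E. \<exists>v. srg_on C E v k b b)) \<or>
           (k \<ge> 2 \<and> (\<forall>C\<in>components E. complete_bipartite_on C E k)))"
proof -
  obtain nB kB lB mB where srgB: "srg_on UNIV (childB UNIV E b a) nB kB lB mB"
    using assms by (auto simp: strongly_deza_def)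
  interpret SD E n k b a nB kB lB mB by unfold_locales (rule assms, rule srgB)
  show ?thesis unfolding eigenvalues_Eig using card_Eig part2 part3 by blast
qed


end
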